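(* Let $q$ be a prime power and let $\Im$ be an $\{f,m;k-1,q\}$-minihyper in $PG(k-1,q)$ of rank $k'<k$. Let $S$ be the $(k'-1)$-dimensional projective subspace of $PG(k-1,q)$ spanned by the points of positive multiplicity of $\Im$, identified with $PG(k'-1,q)$, and let $\Im'$ be the restriction of $\Im$ to $S$, assumed to be an $\{f,m;k'-1,q\}$-minihyper in $S$ with $\mathrm{Rank}(\Im')=k'$. Then $$\mathfrak{e}(\Im)=q^{k-k'}\,\mathfrak{e}(\Im').$$
   Context: A multiset $\Im$ in $PG(k-1,q)$ is a map from the set of points of $PG(k-1,q)$ to the non-negative integers; for a set $Q$ of points, $\Im(Q)=\sum_{\mathbf{p}\in Q}\Im(\mathbf{p})$. $\Im$ is an $\{f,m;k-1,q\}$-minihyper if $\Im(PG(k-1,q))=f$, $\Im(H)\ge m$ for every hyperplane $H$, and $\Im(H_0)=m$ for some hyperplane $H_0$. The rank of $\Im$ is the rank of the $k\times f$ matrix whose columns are (fixed vector representatives of) the points of $\Im$, each repeated according to its multiplicity. $\mathfrak{e}(\Im)$ is the number of hyperplanes $H$ of the ambient projective space with $\Im(H)=m$ (for $\Im'$, the hyperplanes of $S$). *)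

theory Defs
  imports Main
begin

text \<open>Vectors of F^k are represented as functions nat => F vanishing from index k on. The field F is a finite
  field (type class), q = CARD(F).\<close>

definition vecs :: "nat \<Rightarrow> (nat \<Rightarrow> 'a::field) set" where
  "vecs k = {v. \<forall>i\<ge>k. v i = 0}"

definition line :: "(nat \<Rightarrow> 'a::field) \<Rightarrow> (nat \<Rightarrow> 'a) set" where
  "line v = {(\<lambda>i. c * v i) | c. True}"

definition pg_points :: "nat \<Rightarrow> (nat \<Rightarrow> 'a::field) set set" where
  "pg_points k = {line v | v. v \<in> vecs k \<and> v \<noteq> (\<lambda>_. 0)}"

definition pg_hyperplanes :: "nat \<Rightarrow> (nat \<Rightarrow> 'a::field) set set" where
  "pg_hyperplanes k =
     {{x \<in> vecs k. (\<Sum>i<k. a i * x i) = 0} | a. a \<in> vecs k \<and> a \<noteq> (\<lambda>_. 0)}"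

text \<open>A multiset on PG(k-1,q) is a map M from points to nat; M(Q) for a set Q of vectors
  is the total multiplicity of the points contained in Q.\<close>

definition mult_of :: "nat \<Rightarrow> ((nat \<Rightarrow> 'a::field) set \<Rightarrow> nat) \<Rightarrow> (nat \<Rightarrow> 'a) set \<Rightarrow> nat" where
  "mult_of k M Q = (\<Sum>p\<in>{p \<in> pg_points k. p \<subseteq> Q}. M p)"

definition minihyper :: "nat \<Rightarrow> nat \<Rightarrow> nat \<Rightarrow> ((nat \<Rightarrow> 'a::field) set \<Rightarrow> nat) \<Rightarrow> bool" where
  "minihyper k f m M \<longleftrightarrow>
     (\<Sum>p\<in>pg_points k. M p) = f \<and>
     (\<forall>H\<in>pg_hyperplanes k. mult_of k M H \<ge> m) \<and>
     (\<exists>H\<in>pg_hyperplanes k. mult_of k M H = m)"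

definition support_vecs :: "nat \<Rightarrow> ((nat \<Rightarrow> 'a::field) set \<Rightarrow> nat) \<Rightarrow> (nat \<Rightarrow> 'a) set" where
  "support_vecs k M = \<Union>{p \<in> pg_points k. M p > 0}"

definition lin_indep :: "(nat \<Rightarrow> 'a::field) set \<Rightarrow> bool" where
  "lin_indep B \<longleftrightarrow> finite B \<and>
     (\<forall>c. (\<forall>i. (\<Sum>v\<in>B. c v * v i) = 0) \<longrightarrow> (\<forall>v\<in>B. c v = 0))"

text \<open>Rank of the matrix whose columns are the points (with multiplicity): the maximal
  number of linearly independent vectors lying on points of positive multiplicity.\<close>

definition mh_rank :: "nat \<Rightarrow> ((nat \<Rightarrow> 'a::field) set \<Rightarrow> nat) \<Rightarrow> nat" where
  "mh_rank k M = Max {card B | B. B \<subseteq> support_vecs k M \<and> lin_indep B}"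

definition lin_span :: "(nat \<Rightarrow> 'a::field) set \<Rightarrow> (nat \<Rightarrow> 'a) set" where
  "lin_span B = {x. \<exists>c F. finite F \<and> F \<subseteq> B \<and> x = (\<lambda>i. \<Sum>v\<in>F. c v * v i)}"

definition e_count :: "nat \<Rightarrow> nat \<Rightarrow> ((nat \<Rightarrow> 'a::field) set \<Rightarrow> nat) \<Rightarrow> nat" where
  "e_count k m M = card {H \<in> pg_hyperplanes k. mult_of k M H = m}"

text \<open>phi : F^k' -> F^k linear injective map; used to identify PG(k'-1,q) with a subspace.\<close>

definition lin_embedding :: "nat \<Rightarrow> nat \<Rightarrow> ((nat \<Rightarrow> 'a::field) \<Rightarrow> (nat \<Rightarrow> 'a)) \<Rightarrow> bool" where
  "lin_embedding k' k \<phi> \<longleftrightarrow>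
     (\<forall>x\<in>vecs k'. \<phi> x \<in> vecs k) \<and> inj_on \<phi> (vecs k') \<and>
     (\<forall>x\<in>vecs k'. \<forall>y\<in>vecs k'. \<phi> (\<lambda>i. x i + y i) = (\<lambda>i. \<phi> x i + \<phi> y i)) \<and>
     (\<forall>x\<in>vecs k'. \<forall>c. \<phi> (\<lambda>i. c * x i) = (\<lambda>i. c * \<phi> x i))"

end

theory Submission
  imports Defs "HOL-Library.FuncSet"
begin


definition dotp :: "nat \<Rightarrow> (nat \<Rightarrow> 'a::field) \<Rightarrow> (nat \<Rightarrow> 'a) \<Rightarrow> 'a" where
  "dotp n a x = (\<Sum>i<n. a i * x i)"

definition subsp :: "nat \<Rightarrow> (nat \<Rightarrow> 'a::field) set \<Rightarrow> bool" where
  "subsp n W \<longleftrightarrow> W \<subseteq> vecs n \<and> (\<lambda>_. 0) \<in> W \<and> (\<forall>x\<in>W. \<forall>y\<in>W. (\<lambda>i. x i + y i) \<in> W)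
     \<and> (\<forall>c. \<forall>x\<in>W. (\<lambda>i. c * x i) \<in> W)"

definition perp :: "nat \<Rightarrow> (nat \<Rightarrow> 'a::field) set \<Rightarrow> (nat \<Rightarrow> 'a) set" where
  "perp n W = {a\<in>vecs n. \<forall>w\<in>W. dotp n a w = 0}"

lemma dotp_Suc: "dotp (Suc n) a x = dotp n a x + a n * x n"
  by (simp add: dotp_def)

lemma dotp_upd: "dotp n (a(n:=c)) x = dotp n a x"
  unfolding dotp_def by (rule sum.cong) auto

lemma dotp_upd2: "dotp n a (x(n:=c)) = dotp n a x"
  unfolding dotp_def by (rule sum.cong) auto

lemma vecs_SucD:
  assumes "w \<in> vecs (Suc n)" "w n = 0" shows "w \<in> vecs n"
  unfolding vecs_def
proof (intro CollectI allI impI)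
  fix i assume i: "n \<le> i"
  show "w i = 0"
  proof (cases "i = n")
    case True thus ?thesis using assms(2) by simp
  next
    case False with i have "Suc n \<le> i" by simp
    thus ?thesis using assms(1) by (simp add: vecs_def)
  qed
qed

lemma vecs_Suc_bij: "bij_betw (\<lambda>v. (v(n:=0), v n)) (vecs (Suc n)) (vecs n \<times> (UNIV::'a::field set))"
proof (rule bij_betwI[where g="\<lambda>(v,c). v(n:=c)"])
  show "(\<lambda>v. (v(n := 0), v n)) \<in> vecs (Suc n) \<rightarrow> vecs n \<times> (UNIV::'a set)"
    by (auto simp: vecs_def)
  show "(\<lambda>(v, c). v(n := c)) \<in> vecs n \<times> (UNIV::'a set) \<rightarrow> vecs (Suc n)"
    by (auto simp: vecs_def)
qed (auto simp: vecs_def)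

lemma card_vecs: "finite (vecs n :: (nat \<Rightarrow> 'a::{field,finite}) set) \<and> card (vecs n :: (nat \<Rightarrow> 'a) set) = card (UNIV::'a set) ^ n"
proof (induction n)
  case 0
  have "vecs 0 = {(\<lambda>_. 0::'a)}" by (auto simp: vecs_def)
  then show ?case by simp
next
  case (Suc n)
  have b: "bij_betw (\<lambda>v. (v(n:=0), v n)) (vecs (Suc n)) (vecs n \<times> (UNIV::'a set))"
    by (rule vecs_Suc_bij)
  have f: "finite ((vecs n :: (nat \<Rightarrow> 'a) set) \<times> (UNIV::'a set))" using Suc by simp
  have "finite (vecs (Suc n) :: (nat \<Rightarrow> 'a) set)" using bij_betw_finite[OF b] f by simp
  moreover have "card (vecs (Suc n) :: (nat \<Rightarrow> 'a) set) = card ((vecs n :: (nat \<Rightarrow> 'a) set) \<times> (UNIV::'a set))"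
    using bij_betw_same_card[OF b] .
  ultimately show ?case using Suc by (simp add: card_cartesian_product)
qed

lemma finite_vecs[simp]: "finite (vecs n :: (nat \<Rightarrow> 'a::{field,finite}) set)"
  using card_vecs by blast

lemma card_vecs'[simp]: "card (vecs n :: (nat \<Rightarrow> 'a::{field,finite}) set) = card (UNIV::'a set) ^ n"
  using card_vecs by blast

lemma perp_card:
  assumes "subsp n (W :: (nat \<Rightarrow> 'a::{field,finite}) set)"
  shows "card W * card (perp n W) = card (UNIV::'a set) ^ n"
  using assms
proof (induction n arbitrary: W)
  case 0
  then have "W = {(\<lambda>_. 0)}" by (auto simp: subsp_def vecs_def)
  moreover have "perp 0 W = {(\<lambda>_. 0)}" by (auto simp: perp_def vecs_def dotp_def)
  ultimately show ?case by simp
next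
  case (Suc n)
  note sW = Suc.prems[unfolded subsp_def]
  have Wsub: "W \<subseteq> vecs (Suc n)" and W0': "(\<lambda>_. 0) \<in> W"
    and Wadd: "\<And>x y. x\<in>W \<Longrightarrow> y\<in>W \<Longrightarrow> (\<lambda>i. x i + y i) \<in> W"
    and Wsc: "\<And>c x. x\<in>W \<Longrightarrow> (\<lambda>i. c * x i) \<in> W" using sW by auto
  show ?case
  proof (cases "\<forall>w\<in>W. w n = 0")
    case True
    have "W \<subseteq> vecs n" using sW True vecs_SucD by blast
    then have s: "subsp n W" using sW unfolding subsp_def by blast
    have b: "bij_betw (\<lambda>a. (a(n:=0), a n)) (perp (Suc n) W) (perp n W \<times> (UNIV::'a set))"
    proof (rule bij_betwI[where g="\<lambda>(v,c). v(n:=c)"])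
      show "(\<lambda>a. (a(n := 0), a n)) \<in> perp (Suc n) W \<rightarrow> perp n W \<times> UNIV"
      proof
        fix a assume a: "a \<in> perp (Suc n) W"
        have "a(n:=0) \<in> vecs n" using a by (auto simp: perp_def vecs_def)
        moreover have "\<forall>w\<in>W. dotp n (a(n:=0)) w = 0"
          using a True by (fastforce simp: perp_def dotp_upd dotp_Suc)
        ultimately show "(a(n := 0), a n) \<in> perp n W \<times> UNIV" by (simp add: perp_def)
      qed
      show "(\<lambda>(v, c). v(n := c)) \<in> perp n W \<times> UNIV \<rightarrow> perp (Suc n) W"
      proof
        fix x assume x: "x \<in> perp n W \<times> (UNIV :: 'a set)"
        obtain b c where bc: "x = (b, c)" by force
        have "b(n:=c) \<in> vecs (Suc n)" using x bc by (auto simp: perp_def vecs_def)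
        moreover have "\<forall>w\<in>W. dotp (Suc n) (b(n:=c)) w = 0"
          using x bc True by (auto simp: perp_def dotp_upd dotp_Suc)
        ultimately show "(case x of (v, c) \<Rightarrow> v(n := c)) \<in> perp (Suc n) W" using bc by (simp add: perp_def)
      qed
    qed (auto simp: perp_def vecs_def)
    have "card (perp (Suc n) W) = card (perp n W) * card (UNIV::'a set)"
      using bij_betw_same_card[OF b] by (simp add: card_cartesian_product)
    then show ?thesis using Suc.IH[OF s] by simp
  next
    case False
    then obtain w0 where w0: "w0 \<in> W" "w0 n \<noteq> 0" by auto
    define z where "z = (\<lambda>i. inverse (w0 n) * w0 i)"
    have zW: "z \<in> W" using Wsc w0 unfolding z_def by blast
    have zn: "z n = 1" using w0 by (simp add: z_def)
    define W0 where "W0 = {w\<in>W. w n = 0}"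
    have "W0 \<subseteq> vecs n" using sW vecs_SucD unfolding W0_def by blast
    then have s0: "subsp n W0" using sW unfolding subsp_def W0_def by auto
    have sub: "(\<lambda>i. w i - w n * z i) \<in> W" if "w \<in> W" for w
    proof -
      have "(\<lambda>i. (- w n) * z i) \<in> W" using Wsc zW by blast
      then have "(\<lambda>i. w i + (- w n) * z i) \<in> W" using Wadd that by blast
      then show ?thesis by simp
    qed
    have b1: "bij_betw (\<lambda>w. ((\<lambda>i. w i - w n * z i), w n)) W (W0 \<times> (UNIV::'a set))"
    proof (rule bij_betwI[where g="\<lambda>(v,c). (\<lambda>i. v i + c * z i)"])
      show "(\<lambda>w. (\<lambda>i. w i - w n * z i, w n)) \<in> W \<rightarrow> W0 \<times> UNIV"
        using sub zn by (auto simp: W0_def)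
      show "(\<lambda>(v, c) i. v i + c * z i) \<in> W0 \<times> UNIV \<rightarrow> W"
        using Wadd Wsc zW by (auto simp: W0_def)
    qed (auto simp: W0_def zn)
    have cW: "card W = card W0 * card (UNIV::'a set)"
      using bij_betw_same_card[OF b1] by (simp add: card_cartesian_product)
    have b2: "bij_betw (\<lambda>a. a(n:=0)) (perp (Suc n) W) (perp n W0)"
    proof (rule bij_betwI[where g="\<lambda>b. b(n:= - dotp n b z)"])
      show "(\<lambda>a. a(n := 0)) \<in> perp (Suc n) W \<rightarrow> perp n W0"
      proof
        fix a assume a: "a \<in> perp (Suc n) W"
        have "a(n:=0) \<in> vecs n" using a by (auto simp: perp_def vecs_def)
        moreover have "\<forall>w\<in>W0. dotp n (a(n:=0)) w = 0"
          using a by (auto simp: perp_def dotp_upd dotp_Suc W0_def)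
        ultimately show "a(n := 0) \<in> perp n W0" by (simp add: perp_def)
      qed
      show "(\<lambda>b. b(n := - dotp n b z)) \<in> perp n W0 \<rightarrow> perp (Suc n) W"
      proof
        fix b assume b: "b \<in> perp n W0"
        have "b(n := - dotp n b z) \<in> vecs (Suc n)" using b by (auto simp: perp_def vecs_def)
        moreover have "dotp (Suc n) (b(n := - dotp n b z)) w = 0" if w: "w \<in> W" for w
        proof -
          have "(\<lambda>i. w i - w n * z i) \<in> W0" using sub[OF w] zn by (simp add: W0_def)
          then have "dotp n b (\<lambda>i. w i - w n * z i) = 0" using b by (auto simp: perp_def)
          then have "dotp n b w = w n * dotp n b z"
            by (simp add: dotp_def algebra_simps sum_subtractf sum_distrib_left)
          then show ?thesis by (simp add: dotp_Suc dotp_upd)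
        qed
        ultimately show "b(n := - dotp n b z) \<in> perp (Suc n) W" by (simp add: perp_def)
      qed
      show "(a(n := 0))(n := - dotp n (a(n := 0)) z) = a" if "a \<in> perp (Suc n) W" for a
      proof -
        have "dotp (Suc n) a z = 0" using that zW by (auto simp: perp_def)
        then have "a n = - dotp n a z" using zn by (simp add: dotp_Suc add_eq_0_iff)
        then show ?thesis by (auto simp: dotp_upd)
      qed
      show "(b(n := - dotp n b z))(n := 0) = b" if "b \<in> perp n W0" for b
        using that by (auto simp: perp_def vecs_def)
    qed
    have "card (perp (Suc n) W) = card (perp n W0)" using bij_betw_same_card[OF b2] .
    then show ?thesis using Suc.IH[OF s0] cW by simp
  qed
qed



definition ev :: "nat \<Rightarrow> nat \<Rightarrow> 'a::field" where
  "ev i = (\<lambda>j. if j = i then 1 else 0)"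

definition rr :: "((nat \<Rightarrow> 'a) \<Rightarrow> (nat \<Rightarrow> 'a)) \<Rightarrow> nat \<Rightarrow> nat \<Rightarrow> (nat \<Rightarrow> 'a::field) \<Rightarrow> (nat \<Rightarrow> 'a)" where
  "rr \<phi> k k' a = (\<lambda>i. if i < k' then (\<Sum>j<k. a j * \<phi> (ev i) j) else 0)"

lemma ev_vecs: "i < n \<Longrightarrow> ev i \<in> vecs n"
  by (simp add: ev_def vecs_def)

lemma dotp_ev: "dotp n b (ev i) = (if i < n then b i else 0)"
  by (simp add: dotp_def ev_def if_distrib cong: if_cong)

lemma vec_expand: "x \<in> vecs n \<Longrightarrow> x = (\<lambda>j. \<Sum>i<n. x i * ev i j)"
  by (rule ext) (auto simp: ev_def vecs_def if_distrib cong: if_cong)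

lemma sum_ev_vecs: assumes "I \<subseteq> {..<n}" shows "(\<lambda>j. \<Sum>i\<in>I. x i * ev i j) \<in> vecs n"
  unfolding vecs_def ev_def
proof (intro CollectI allI impI)
  fix i assume "n \<le> i"
  then show "(\<Sum>ia\<in>I. x ia * (if i = ia then 1 else 0)) = 0"
    using assms by (intro sum.neutral) auto
qed

lemma card_preimage_sum:
  assumes "finite A" "finite B"
  shows "card {a\<in>A. g a \<in> B} = (\<Sum>b\<in>B. card {a\<in>A. g a = b})"
proof -
  have "{a\<in>A. g a \<in> B} = (\<Union>b\<in>B. {a\<in>A. g a = b})" by auto
  moreover have "card (\<Union>b\<in>B. {a\<in>A. g a = b}) = (\<Sum>b\<in>B. card {a\<in>A. g a = b})"
    by (rule card_UN_disjoint) (use assms in auto)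
  ultimately show ?thesis by simp
qed

context
  fixes \<phi> :: "(nat \<Rightarrow> 'a::{field,finite}) \<Rightarrow> (nat \<Rightarrow> 'a)" and k k' :: nat
  assumes emb: "lin_embedding k' k \<phi>"
begin

lemma phi_vecs: "x \<in> vecs k' \<Longrightarrow> \<phi> x \<in> vecs k"
  using emb by (simp add: lin_embedding_def)
lemma phi_inj: "inj_on \<phi> (vecs k')"
  using emb by (simp add: lin_embedding_def)
lemma phi_add: "x\<in>vecs k' \<Longrightarrow> y\<in>vecs k' \<Longrightarrow> \<phi> (\<lambda>i. x i + y i) = (\<lambda>i. \<phi> x i + \<phi> y i)"
  using emb by (simp add: lin_embedding_def)
lemma phi_smul: "x\<in>vecs k' \<Longrightarrow> \<phi> (\<lambda>i. c * x i) = (\<lambda>i. c * \<phi> x i)"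
  using emb by (simp add: lin_embedding_def)
lemma phi_0: "\<phi> (\<lambda>i. 0) = (\<lambda>i. 0)"
  using phi_smul[of "\<lambda>i. 0" 0] by (simp add: vecs_def)

lemma phi_sum: "finite I \<Longrightarrow> I \<subseteq> {..<k'} \<Longrightarrow>
   \<phi> (\<lambda>j. \<Sum>i\<in>I. x i * ev i j) = (\<lambda>j. \<Sum>i\<in>I. x i * \<phi> (ev i) j)"
proof (induction I rule: finite_induct)
  case empty
  then show ?case using phi_0 by simp
next
  case (insert a F)
  have a: "a < k'" using insert by auto
  have e: "ev a \<in> vecs k'" using a ev_vecs by blast
  have v1: "(\<lambda>j. x a * ev a j) \<in> vecs k'" using e by (auto simp: vecs_def)
  have v2: "(\<lambda>j. \<Sum>i\<in>F. x i * ev i j) \<in> vecs k'" using insert sum_ev_vecs by auto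
  have "\<phi> (\<lambda>j. \<Sum>i\<in>insert a F. x i * ev i j) = \<phi> (\<lambda>j. x a * ev a j + (\<Sum>i\<in>F. x i * ev i j))"
    using insert by simp
  also have "\<dots> = (\<lambda>j. \<phi> (\<lambda>j. x a * ev a j) j + \<phi> (\<lambda>j. \<Sum>i\<in>F. x i * ev i j) j)"
    using phi_add[OF v1 v2] by simp
  also have "\<dots> = (\<lambda>j. x a * \<phi> (ev a) j + (\<Sum>i\<in>F. x i * \<phi> (ev i) j))"
    using phi_smul[OF e, of "x a"] insert by simp
  also have "\<dots> = (\<lambda>j. \<Sum>i\<in>insert a F. x i * \<phi> (ev i) j)" using insert by simp
  finally show ?case .
qed

lemma phi_expand: "x \<in> vecs k' \<Longrightarrow> \<phi> x = (\<lambda>j. \<Sum>i<k'. x i * \<phi> (ev i) j)"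
proof -
  assume x: "x \<in> vecs k'"
  have "\<phi> x = \<phi> (\<lambda>j. \<Sum>i<k'. x i * ev i j)" using vec_expand[OF x] by simp
  also have "\<dots> = (\<lambda>j. \<Sum>i<k'. x i * \<phi> (ev i) j)" by (rule phi_sum) auto
  finally show ?thesis .
qed

lemma dotp_phi: "x \<in> vecs k' \<Longrightarrow> dotp k a (\<phi> x) = dotp k' (rr \<phi> k k' a) x"
proof -
  assume x: "x \<in> vecs k'"
  have "dotp k a (\<phi> x) = (\<Sum>j<k. a j * (\<Sum>i<k'. x i * \<phi> (ev i) j))"
    by (subst phi_expand[OF x]) (simp add: dotp_def)
  also have "\<dots> = (\<Sum>j<k. \<Sum>i<k'. a j * (x i * \<phi> (ev i) j))"
    by (simp add: sum_distrib_left)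
  also have "\<dots> = (\<Sum>i<k'. \<Sum>j<k. a j * (x i * \<phi> (ev i) j))"
    by (rule sum.swap)
  also have "\<dots> = (\<Sum>i<k'. (\<Sum>j<k. a j * \<phi> (ev i) j) * x i)"
    by (rule sum.cong[OF refl]) (unfold sum_distrib_right, simp add: mult_ac)
  also have "\<dots> = dotp k' (rr \<phi> k k' a) x"
    by (simp add: dotp_def rr_def)
  finally show ?thesis .
qed

lemma rr_vecs: "rr \<phi> k k' a \<in> vecs k'"
  by (simp add: rr_def vecs_def)

lemma rr_diff: "rr \<phi> k k' (\<lambda>i. a i - b i) = (\<lambda>i. rr \<phi> k k' a i - rr \<phi> k k' b i)"
  by (rule ext) (simp add: rr_def algebra_simps sum_subtractf)

lemma rr_add: "rr \<phi> k k' (\<lambda>i. a i + b i) = (\<lambda>i. rr \<phi> k k' a i + rr \<phi> k k' b i)"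
  by (rule ext) (simp add: rr_def algebra_simps sum.distrib)

lemma rr_0: "rr \<phi> k k' (\<lambda>i. 0) = (\<lambda>i. 0)"
  by (rule ext) (simp add: rr_def)

lemma rr_zero_iff: "rr \<phi> k k' a = (\<lambda>i. 0) \<longleftrightarrow> (\<forall>x\<in>vecs k'. dotp k a (\<phi> x) = 0)"
proof
  assume h: "rr \<phi> k k' a = (\<lambda>i. 0)"
  show "\<forall>x\<in>vecs k'. dotp k a (\<phi> x) = 0"
  proof
    fix x :: "nat \<Rightarrow> 'a" assume "x \<in> vecs k'"
    then have "dotp k a (\<phi> x) = dotp k' (\<lambda>i. 0) x" using h by (simp add: dotp_phi)
    then show "dotp k a (\<phi> x) = 0" by (simp add: dotp_def)
  qed
next
  assume h: "\<forall>x\<in>vecs k'. dotp k a (\<phi> x) = 0"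
  show "rr \<phi> k k' a = (\<lambda>i. 0)"
  proof
    fix i
    show "rr \<phi> k k' a i = 0"
    proof (cases "i < k'")
      case True
      then have "dotp k' (rr \<phi> k k' a) (ev i) = 0" using h ev_vecs dotp_phi by metis
      then show ?thesis using True by (simp add: dotp_ev)
    qed (simp add: rr_def)
  qed
qed

lemma S_subsp: "subsp k (\<phi> ` vecs k')"
  unfolding subsp_def
proof (intro conjI ballI allI)
  show "\<phi> ` vecs k' \<subseteq> vecs k" using phi_vecs by auto
  have "(\<lambda>_. 0) \<in> vecs k'" by (simp add: vecs_def)
  then show "(\<lambda>_. 0) \<in> \<phi> ` vecs k'" using phi_0 by force
  fix x y assume x: "x \<in> \<phi> ` vecs k'" and y: "y \<in> \<phi> ` vecs k'"
  then obtain x' y' where x': "x' \<in> vecs k'" "x = \<phi> x'" and y': "y' \<in> vecs k'" "y = \<phi> y'" by auto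
  have h1: "(\<lambda>i. x' i + y' i) \<in> vecs k'" using x' y' by (simp add: vecs_def)
  have h2: "\<phi> (\<lambda>i. x' i + y' i) = (\<lambda>i. x i + y i)" using phi_add x' y' by simp
  show "(\<lambda>i. x i + y i) \<in> \<phi> ` vecs k'" by (rule image_eqI[where f=\<phi>, OF sym[OF h2] h1])
next
  fix c x assume x: "x \<in> \<phi> ` vecs k'"
  then obtain x' where x': "x' \<in> vecs k'" "x = \<phi> x'" by auto
  have h1: "(\<lambda>i. c * x' i) \<in> vecs k'" using x' by (simp add: vecs_def)
  have h2: "\<phi> (\<lambda>i. c * x' i) = (\<lambda>i. c * x i)" using phi_smul x' by simp
  show "(\<lambda>i. c * x i) \<in> \<phi> ` vecs k'" by (rule image_eqI[where f=\<phi>, OF sym[OF h2] h1])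
qed

lemma card_S: "card (\<phi> ` vecs k') = card (UNIV::'a set) ^ k'"
  using card_image[OF phi_inj] by simp

lemma card_ker:
  assumes le: "k' \<le> k"
  shows "card {a\<in>vecs k. rr \<phi> k k' a = (\<lambda>i. 0)} = card (UNIV::'a set) ^ (k - k')"
proof -
  have "perp k (\<phi> ` vecs k') = {a\<in>vecs k. rr \<phi> k k' a = (\<lambda>i. 0)}"
    by (auto simp: perp_def rr_zero_iff)
  then have "card (UNIV::'a set) ^ k' * card {a\<in>vecs k. rr \<phi> k k' a = (\<lambda>i. 0)} = card (UNIV::'a set) ^ k"
    using perp_card[OF S_subsp] card_S by simp
  moreover have "card (UNIV::'a set) ^ k = card (UNIV::'a set) ^ k' * card (UNIV::'a set) ^ (k - k')"
    using le by (simp add: power_add[symmetric])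
  moreover have "card (UNIV::'a set) > 0" by (simp add: card_gt_0_iff)
  ultimately show ?thesis by simp
qed

lemma card_fiber:
  assumes le: "k' \<le> k" and a0: "a0 \<in> vecs k"
  shows "card {a\<in>vecs k. rr \<phi> k k' a = rr \<phi> k k' a0} = card (UNIV::'a set) ^ (k - k')"
proof -
  have "{a\<in>vecs k. rr \<phi> k k' a = rr \<phi> k k' a0} = (\<lambda>z i. a0 i + z i) ` {a\<in>vecs k. rr \<phi> k k' a = (\<lambda>i. 0)}"
  proof (intro equalityI subsetI)
    fix a assume a: "a \<in> {a\<in>vecs k. rr \<phi> k k' a = rr \<phi> k k' a0}"
    have m: "(\<lambda>i. a i - a0 i) \<in> {a\<in>vecs k. rr \<phi> k k' a = (\<lambda>i. 0)}"
      using a a0 by (simp add: vecs_def rr_diff)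
    show "a \<in> (\<lambda>z i. a0 i + z i) ` {a\<in>vecs k. rr \<phi> k k' a = (\<lambda>i. 0)}"
      by (rule image_eqI[OF _ m]) simp
  next
    fix a assume "a \<in> (\<lambda>z i. a0 i + z i) ` {a\<in>vecs k. rr \<phi> k k' a = (\<lambda>i. 0)}"
    then obtain z where z: "z \<in> vecs k" "rr \<phi> k k' z = (\<lambda>i. 0)" "a = (\<lambda>i. a0 i + z i)" by auto
    then show "a \<in> {a\<in>vecs k. rr \<phi> k k' a = rr \<phi> k k' a0}"
      using a0 by (simp add: vecs_def rr_add)
  qed
  moreover have inj: "inj_on (\<lambda>z i. a0 i + z i) X" for X
    by (rule inj_onI) (simp add: fun_eq_iff)
  ultimately show ?thesis using card_ker[OF le] card_image[OF inj] by simp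
qed

lemma rr_surj:
  assumes le: "k' \<le> k"
  shows "rr \<phi> k k' ` vecs k = vecs k'"
proof -
  let ?Q = "card (UNIV::'a set) ^ (k - k')"
  let ?V = "rr \<phi> k k' ` vecs k"
  have V: "?V \<subseteq> vecs k'" using rr_vecs by auto
  have "{a\<in>vecs k. rr \<phi> k k' a \<in> vecs k'} = vecs k" using rr_vecs by auto
  then have "card (vecs k :: (nat \<Rightarrow> 'a) set) = (\<Sum>b\<in>vecs k'. card {a\<in>vecs k. rr \<phi> k k' a = b})"
    using card_preimage_sum[of "vecs k" "vecs k'" "rr \<phi> k k'"] by simp
  also have "\<dots> = (\<Sum>b\<in>?V. card {a\<in>vecs k. rr \<phi> k k' a = b})"
    by (rule sum.mono_neutral_right) (use V in auto)
  also have "\<dots> = (\<Sum>b\<in>?V. ?Q)"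
    by (rule sum.cong) (auto simp: card_fiber[OF le])
  also have "\<dots> = card ?V * ?Q" by simp
  finally have "card (UNIV::'a set) ^ k = card ?V * ?Q" by simp
  moreover have "card (UNIV::'a set) ^ k = card (UNIV::'a set) ^ k' * ?Q"
    using le by (simp add: power_add[symmetric])
  ultimately have "card ?V = card (UNIV::'a set) ^ k'" by simp
  then have "card ?V = card (vecs k' :: (nat \<Rightarrow> 'a) set)" by simp
  then show ?thesis using card_subset_eq[OF finite_vecs V] by simp
qed

lemma card_rr_preimage:
  assumes le: "k' \<le> k" and B: "B \<subseteq> vecs k'"
  shows "card {a\<in>vecs k. rr \<phi> k k' a \<in> B} = card B * card (UNIV::'a set) ^ (k - k')"
proof -
  have fB: "finite B" using B finite_subset finite_vecs by blast
  have "card {a\<in>vecs k. rr \<phi> k k' a \<in> B} = (\<Sum>b\<in>B. card {a\<in>vecs k. rr \<phi> k k' a = b})"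
    by (rule card_preimage_sum[OF finite_vecs fB])
  also have "\<dots> = (\<Sum>b\<in>B. card (UNIV::'a set) ^ (k - k'))"
  proof (rule sum.cong)
    fix b assume "b \<in> B"
    then obtain a0 where "a0 \<in> vecs k" "b = rr \<phi> k k' a0" using B rr_surj[OF le] by blast
    then show "card {a\<in>vecs k. rr \<phi> k k' a = b} = card (UNIV::'a set) ^ (k - k')"
      using card_fiber[OF le] by simp
  qed simp
  finally show ?thesis by simp
qed

end



definition hyp :: "nat \<Rightarrow> (nat \<Rightarrow> 'a::field) \<Rightarrow> (nat \<Rightarrow> 'a) set" where
  "hyp n a = {x\<in>vecs n. dotp n a x = 0}"

lemma pg_hyp_eq: "pg_hyperplanes n = {hyp n a | a. a \<in> vecs n \<and> a \<noteq> (\<lambda>_. 0)}"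
  by (simp add: pg_hyperplanes_def hyp_def dotp_def)

lemma dotp_smul: "dotp n (\<lambda>i. c * a i) x = c * dotp n a x"
  by (simp add: dotp_def sum_distrib_left mult.assoc)

lemma dotp_lin: "dotp n b (\<lambda>l. \<alpha> * y l - \<beta> * z l) = \<alpha> * dotp n b y - \<beta> * dotp n b z"
  by (simp add: dotp_def sum_distrib_left sum_subtractf algebra_simps)

lemma hyp_smul: "c \<noteq> 0 \<Longrightarrow> hyp n (\<lambda>i. c * a i) = hyp n a"
  by (simp add: hyp_def dotp_smul)

lemma nonzero_idx:
  assumes "a \<in> vecs n" "a \<noteq> (\<lambda>_. 0)"
  obtains j where "j < n" "a j \<noteq> 0"
proof -
  obtain j where j: "a j \<noteq> 0" using assms(2) by (auto simp: fun_eq_iff)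
  have "j < n"
  proof (rule ccontr)
    assume "\<not> j < n"
    then have "n \<le> j" by simp
    then have "a j = 0" using assms(1) by (simp add: vecs_def)
    with j show False by simp
  qed
  then show ?thesis using that j by blast
qed

lemma hyp_eq_prop:
  assumes a0: "a0 \<in> vecs n" "a0 \<noteq> (\<lambda>_. 0)" and a: "a \<in> vecs n" and h: "hyp n a = hyp n a0"
  shows "\<exists>c. a = (\<lambda>i. c * a0 i)"
proof -
  obtain j where j: "j < n" "a0 j \<noteq> 0" using nonzero_idx[OF a0] by blast
  have "a i = a j / a0 j * a0 i" for i
  proof (cases "i < n")
    case True
    define x where "x = (\<lambda>l. a0 j * ev i l - a0 i * ev j l)"
    have xv: "x \<in> vecs n" using True j by (simp add: x_def vecs_def ev_def)
    have "dotp n a0 x = 0" using True j by (simp add: x_def dotp_lin dotp_ev)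
    then have "x \<in> hyp n a" using h xv by (simp add: hyp_def)
    then have "dotp n a x = 0" by (simp add: hyp_def)
    then have "a0 j * a i - a0 i * a j = 0" using True j by (simp add: x_def dotp_lin dotp_ev)
    then show ?thesis using j by (simp add: field_simps)
  next
    case False
    then show ?thesis using a a0 by (simp add: vecs_def)
  qed
  then show ?thesis by blast
qed

lemma finite_pg_points: "finite (pg_points n :: (nat \<Rightarrow> 'a::{field,finite}) set set)"
proof -
  have "pg_points n \<subseteq> Pow (vecs n :: (nat \<Rightarrow> 'a) set)"
    by (auto simp: pg_points_def line_def vecs_def)
  then show ?thesis by (rule finite_subset) simp
qed

lemma finite_pg_hyp: "finite (pg_hyperplanes n :: (nat \<Rightarrow> 'a::{field,finite}) set set)"
proof -
  have "pg_hyperplanes n \<subseteq> Pow (vecs n :: (nat \<Rightarrow> 'a) set)"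
    by (auto simp: pg_hyperplanes_def)
  then show ?thesis by (rule finite_subset) simp
qed

lemma card_hyp_fiber:
  fixes a0 :: "nat \<Rightarrow> 'a::{field,finite}"
  assumes a0: "a0 \<in> vecs n" "a0 \<noteq> (\<lambda>_. 0)"
  shows "card {a\<in>vecs n. a \<noteq> (\<lambda>_. 0) \<and> hyp n a = hyp n a0} = card (UNIV::'a set) - 1"
proof -
  obtain j where j: "j < n" "a0 j \<noteq> 0" using nonzero_idx[OF a0] by blast
  have eq: "{a\<in>vecs n. a \<noteq> (\<lambda>_. 0) \<and> hyp n a = hyp n a0} = (\<lambda>c i. c * a0 i) ` (UNIV - {0})"
  proof (intro equalityI subsetI)
    fix a assume "a \<in> {a\<in>vecs n. a \<noteq> (\<lambda>_. 0) \<and> hyp n a = hyp n a0}"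
    then have a: "a \<in> vecs n" "a \<noteq> (\<lambda>_. 0)" "hyp n a = hyp n a0" by auto
    obtain c where c: "a = (\<lambda>i. c * a0 i)" using hyp_eq_prop[OF a0 a(1) a(3)] by blast
    have "c \<noteq> 0" using c a(2) by auto
    then show "a \<in> (\<lambda>c i. c * a0 i) ` (UNIV - {0})" using c by blast
  next
    fix a assume "a \<in> (\<lambda>c i. c * a0 i) ` (UNIV - {0})"
    then obtain c where c: "c \<noteq> 0" "a = (\<lambda>i. c * a0 i)" by auto
    have "a \<in> vecs n" using c a0 by (simp add: vecs_def)
    moreover have "a \<noteq> (\<lambda>_. 0)" using c j by (auto simp: fun_eq_iff)
    moreover have "hyp n a = hyp n a0" using c hyp_smul by simp
    ultimately show "a \<in> {a\<in>vecs n. a \<noteq> (\<lambda>_. 0) \<and> hyp n a = hyp n a0}" by simp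
  qed
  have inj: "inj_on (\<lambda>c i. c * a0 i) (UNIV - {0})"
  proof (rule inj_onI)
    fix c d assume "(\<lambda>i. c * a0 i) = (\<lambda>i. d * a0 i)"
    then have "c * a0 j = d * a0 j" by meson
    then show "c = d" using j by simp
  qed
  show ?thesis unfolding eq card_image[OF inj] by (simp add: card_Diff_singleton)
qed

lemma card_forms:
  fixes X :: "(nat \<Rightarrow> 'a::{field,finite}) set set"
  assumes X: "X \<subseteq> pg_hyperplanes n"
  shows "card {a\<in>vecs n. a \<noteq> (\<lambda>_. 0) \<and> hyp n a \<in> X} = (card (UNIV::'a set) - 1) * card X"
proof -
  have fX: "finite X" using X finite_pg_hyp finite_subset by blast
  have "{a\<in>vecs n. a \<noteq> (\<lambda>_. 0) \<and> hyp n a \<in> X} = (\<Union>H\<in>X. {a\<in>vecs n. a \<noteq> (\<lambda>_. 0) \<and> hyp n a = H})"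
    by auto
  moreover have "card (\<Union>H\<in>X. {a\<in>vecs n. a \<noteq> (\<lambda>_. 0) \<and> hyp n a = H}) =
      (\<Sum>H\<in>X. card {a\<in>vecs n. a \<noteq> (\<lambda>_. 0) \<and> hyp n a = H})"
    by (rule card_UN_disjoint) (use fX in auto)
  moreover have "(\<Sum>H\<in>X. card {a\<in>vecs n. a \<noteq> (\<lambda>_. 0) \<and> hyp n a = H}) = (\<Sum>H\<in>X. card (UNIV::'a set) - 1)"
  proof (rule sum.cong[OF refl])
    fix H assume "H \<in> X"
    then obtain a0 where a0: "a0 \<in> vecs n" "a0 \<noteq> (\<lambda>_. 0)" "H = hyp n a0"
      using X by (auto simp: pg_hyp_eq)
    show "card {a\<in>vecs n. a \<noteq> (\<lambda>_. 0) \<and> hyp n a = H} = card (UNIV::'a set) - 1"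
      using card_hyp_fiber[OF a0(1,2)] a0(3) by simp
  qed
  ultimately show ?thesis by simp
qed



lemma line_vecs: "v \<in> vecs n \<Longrightarrow> line v \<subseteq> vecs n"
  by (auto simp: line_def vecs_def)

lemma v_in_line: "v \<in> line v"
proof -
  have "v = (\<lambda>i. 1 * v i)" by simp
  then show ?thesis unfolding line_def by blast
qed

lemma pt_vecs: "p \<in> pg_points n \<Longrightarrow> p \<subseteq> vecs n"
  by (auto simp: pg_points_def dest: line_vecs)

lemma hyp_subsp: "subsp n (hyp n b)"
  unfolding subsp_def hyp_def
proof (intro conjI ballI allI)
  show "(\<lambda>_. 0) \<in> {x \<in> vecs n. dotp n b x = 0}" by (simp add: vecs_def dotp_def)
  fix x y assume "x \<in> {x \<in> vecs n. dotp n b x = 0}" "y \<in> {x \<in> vecs n. dotp n b x = 0}"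
  then show "(\<lambda>i. x i + y i) \<in> {x \<in> vecs n. dotp n b x = 0}"
    by (simp add: vecs_def dotp_def algebra_simps sum.distrib)
next
  fix c x assume "x \<in> {x \<in> vecs n. dotp n b x = 0}"
  then show "(\<lambda>i. c * x i) \<in> {x \<in> vecs n. dotp n b x = 0}"
    by (simp add: vecs_def dotp_def sum_distrib_left[symmetric] mult.left_commute)
qed auto

lemma span_sub:
  assumes W: "subsp n W" and B: "B \<subseteq> W"
  shows "lin_span B \<subseteq> W"
proof
  have Wadd: "\<And>x y. x\<in>W \<Longrightarrow> y\<in>W \<Longrightarrow> (\<lambda>i. x i + y i) \<in> W"
    and Wsc: "\<And>c x. x\<in>W \<Longrightarrow> (\<lambda>i. c * x i) \<in> W" and W0: "(\<lambda>_. 0) \<in> W"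
    using W by (auto simp: subsp_def)
  fix x assume "x \<in> lin_span B"
  then obtain c F where F: "finite F" "F \<subseteq> B" "x = (\<lambda>i. \<Sum>v\<in>F. c v * v i)"
    by (auto simp: lin_span_def)
  have "F \<subseteq> B \<Longrightarrow> (\<lambda>i. \<Sum>v\<in>F. c v * v i) \<in> W" using F(1)
  proof (induction F rule: finite_induct)
    case empty then show ?case using W0 by simp
  next
    case (insert a F)
    have "(\<lambda>i. c a * a i) \<in> W" using Wsc insert B by blast
    moreover have "(\<lambda>i. \<Sum>v\<in>F. c v * v i) \<in> W" using insert by blast
    ultimately have "(\<lambda>i. c a * a i + (\<Sum>v\<in>F. c v * v i)) \<in> W" using Wadd by blast
    then show ?case using insert by simp
  qed
  then show "x \<in> W" using F by simp
qed

context
  fixes M :: "(nat \<Rightarrow> 'a::{field,finite}) set \<Rightarrow> nat"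
    and \<phi> :: "(nat \<Rightarrow> 'a) \<Rightarrow> (nat \<Rightarrow> 'a)"
    and k k' f m :: nat
  assumes emb: "lin_embedding k' k \<phi>"
    and S: "\<phi> ` vecs k' = lin_span (support_vecs k M)"
    and mh': "minihyper k' f m (\<lambda>p. M (\<phi> ` p))"
begin

lemma phi_line:
  assumes v: "v \<in> vecs k'" shows "\<phi> ` line v = line (\<phi> v)"
proof (intro equalityI subsetI)
  fix y assume "y \<in> \<phi> ` line v"
  then obtain c where "y = \<phi> (\<lambda>i. c * v i)" by (auto simp: line_def)
  then have "y = (\<lambda>i. c * \<phi> v i)" using phi_smul[OF emb v] by simp
  then show "y \<in> line (\<phi> v)" by (auto simp: line_def)
next
  fix y assume "y \<in> line (\<phi> v)"
  then obtain c where "y = (\<lambda>i. c * \<phi> v i)" by (auto simp: line_def)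
  then have "y = \<phi> (\<lambda>i. c * v i)" using phi_smul[OF emb v] by simp
  moreover have "(\<lambda>i. c * v i) \<in> line v" by (auto simp: line_def)
  ultimately show "y \<in> \<phi> ` line v" by blast
qed

lemma phi_ne0:
  assumes v: "v \<in> vecs k'" "v \<noteq> (\<lambda>_. 0)" shows "\<phi> v \<noteq> (\<lambda>_. 0)"
proof
  assume h: "\<phi> v = (\<lambda>_. 0)"
  have z: "(\<lambda>_. 0) \<in> vecs k'" by (simp add: vecs_def)
  have e: "\<phi> v = \<phi> (\<lambda>_. 0)" using h phi_0[OF emb] by simp
  have "v = (\<lambda>_. 0)" by (rule inj_onD[OF phi_inj[OF emb] e v(1) z])
  then show False using v(2) by simp
qed

lemma image_points:
  assumes p': "p' \<in> pg_points k'" shows "\<phi> ` p' \<in> pg_points k"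
proof -
  obtain v where v: "v \<in> vecs k'" "v \<noteq> (\<lambda>_. 0)" "p' = line v" using p' by (auto simp: pg_points_def)
  have 1: "\<phi> ` p' = line (\<phi> v)" using phi_line[OF v(1)] v(3) by simp
  have 2: "\<phi> v \<in> vecs k" using phi_vecs[OF emb v(1)] .
  have 3: "\<phi> v \<noteq> (\<lambda>_. 0)" using phi_ne0[OF v(1,2)] .
  show ?thesis unfolding pg_points_def 1 using 2 3 by blast
qed

lemma S_points:
  assumes p: "p \<in> pg_points k" and pS: "p \<subseteq> \<phi> ` vecs k'"
  shows "\<exists>p'\<in>pg_points k'. p = \<phi> ` p'"
proof -
  obtain w where w: "w \<in> vecs k" "w \<noteq> (\<lambda>_. 0)" "p = line w" using p by (auto simp: pg_points_def)
  have "w \<in> p" using w v_in_line by simp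
  then obtain v where v: "v \<in> vecs k'" "w = \<phi> v" using pS by auto
  have "v \<noteq> (\<lambda>_. 0)"
  proof
    assume "v = (\<lambda>_. 0)"
    then have "w = (\<lambda>_. 0)" using v(2) phi_0[OF emb] by simp
    then show False using w(2) by simp
  qed
  then have "line v \<in> pg_points k'" unfolding pg_points_def using v(1) by blast
  moreover have "p = \<phi> ` line v" using phi_line v w by simp
  ultimately show ?thesis by blast
qed

lemma supp_S:
  assumes p: "p \<in> pg_points k" and Mp: "M p > 0" shows "p \<subseteq> \<phi> ` vecs k'"
proof -
  have 1: "p \<subseteq> support_vecs k M" unfolding support_vecs_def
    by (rule Union_upper) (simp add: p Mp)
  have 2: "support_vecs k M \<subseteq> lin_span (support_vecs k M)"
  proof
    fix v assume v: "v \<in> support_vecs k M"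
    show "v \<in> lin_span (support_vecs k M)" unfolding lin_span_def
      apply (rule CollectI)
      apply (rule exI[where x="\<lambda>_. 1"])
      apply (rule exI[where x="{v}"])
      using v by simp
  qed
  have "p \<subseteq> lin_span (support_vecs k M)" using 1 2 by (rule order_trans)
  then show ?thesis unfolding S .
qed

lemma phi_subsp_img: "subsp k' W \<Longrightarrow> subsp k (\<phi> ` W)"
proof -
  assume W: "subsp k' W"
  have Wv: "W \<subseteq> vecs k'" and Wadd: "\<And>x y. x\<in>W \<Longrightarrow> y\<in>W \<Longrightarrow> (\<lambda>i. x i + y i) \<in> W"
    and Wsc: "\<And>c x. x\<in>W \<Longrightarrow> (\<lambda>i. c * x i) \<in> W" and W0: "(\<lambda>_. 0) \<in> W"
    using W by (auto simp: subsp_def)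
  show ?thesis
  unfolding subsp_def
  proof (intro conjI ballI allI)
    show "\<phi> ` W \<subseteq> vecs k" using phi_vecs[OF emb] Wv by auto
    show "(\<lambda>_. 0) \<in> \<phi> ` W" using phi_0[OF emb] W0 by force
    fix x y assume x: "x \<in> \<phi> ` W" and y: "y \<in> \<phi> ` W"
    then obtain x' y' where x': "x' \<in> W" "x = \<phi> x'" and y': "y' \<in> W" "y = \<phi> y'" by auto
    have h1: "(\<lambda>i. x' i + y' i) \<in> W" using x' y' Wadd by simp
    have h2: "\<phi> (\<lambda>i. x' i + y' i) = (\<lambda>i. x i + y i)" using phi_add[OF emb] x' y' Wv by auto
    show "(\<lambda>i. x i + y i) \<in> \<phi> ` W" by (rule image_eqI[where f=\<phi>, OF sym[OF h2] h1])
  next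
    fix c x assume x: "x \<in> \<phi> ` W"
    then obtain x' where x': "x' \<in> W" "x = \<phi> x'" by auto
    have h1: "(\<lambda>i. c * x' i) \<in> W" using x' Wsc by simp
    have h2: "\<phi> (\<lambda>i. c * x' i) = (\<lambda>i. c * x i)" using phi_smul[OF emb] x' Wv by auto
    show "(\<lambda>i. c * x i) \<in> \<phi> ` W" by (rule image_eqI[where f=\<phi>, OF sym[OF h2] h1])
  qed
qed

lemma transfer:
  "mult_of k M H = mult_of k' (\<lambda>p. M (\<phi> ` p)) {x\<in>vecs k'. \<phi> x \<in> H}"
proof -
  let ?Q = "{x\<in>vecs k'. \<phi> x \<in> H}"
  let ?A = "{p\<in>pg_points k. p \<subseteq> H}"
  let ?A' = "{p\<in>pg_points k. p \<subseteq> H \<and> p \<subseteq> \<phi> ` vecs k'}"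
  let ?P = "{p'\<in>pg_points k'. p' \<subseteq> ?Q}"
  have "mult_of k M H = sum M ?A" by (simp add: mult_of_def)
  also have "\<dots> = sum M ?A'"
  proof (rule sum.mono_neutral_right)
    show "finite ?A" by (rule finite_subset[OF _ finite_pg_points[of k]]) auto
    show "?A' \<subseteq> ?A" by auto
    show "\<forall>p\<in>?A - ?A'. M p = 0"
    proof
      fix p assume p: "p \<in> ?A - ?A'"
      show "M p = 0"
      proof (rule ccontr)
        assume "M p \<noteq> 0"
        then have "M p > 0" by simp
        then have "p \<subseteq> \<phi> ` vecs k'" using supp_S p by blast
        then show False using p by blast
      qed
    qed
  qed
  also have "\<dots> = sum (\<lambda>p'. M (\<phi> ` p')) ?P"
  proof (rule sum.reindex_bij_betw[symmetric])
    show "bij_betw ((`) \<phi>) ?P ?A'"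
    proof (rule bij_betw_imageI)
      show "inj_on ((`) \<phi>) ?P"
      proof (rule inj_onI)
        fix p1 p2 assume h: "p1 \<in> ?P" "p2 \<in> ?P" "\<phi> ` p1 = \<phi> ` p2"
        have s1: "p1 \<subseteq> vecs k'" using h(1) pt_vecs by blast
        have s2: "p2 \<subseteq> vecs k'" using h(2) pt_vecs by blast
        show "p1 = p2" using inj_on_image_eq_iff[OF phi_inj[OF emb] s1 s2] h(3) by simp
      qed
      show "(`) \<phi> ` ?P = ?A'"
      proof (intro equalityI subsetI)
        fix p assume "p \<in> (`) \<phi> ` ?P"
        then obtain p' where p': "p' \<in> pg_points k'" "p' \<subseteq> ?Q" "p = \<phi> ` p'" by blast
        have "p \<in> pg_points k" using image_points[OF p'(1)] p'(3) by simp
        moreover have "p \<subseteq> H" using p'(2,3) by blast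
        moreover have "p \<subseteq> \<phi> ` vecs k'" using pt_vecs[OF p'(1)] p'(3) by blast
        ultimately show "p \<in> ?A'" by simp
      next
        fix p assume p: "p \<in> ?A'"
        then have p1: "p \<in> pg_points k" and p2: "p \<subseteq> H" and p3: "p \<subseteq> \<phi> ` vecs k'" by simp_all
        obtain p' where p': "p' \<in> pg_points k'" "p = \<phi> ` p'" using S_points[OF p1 p3] by blast
        have "p' \<subseteq> ?Q"
        proof
          fix x assume x: "x \<in> p'"
          then have "x \<in> vecs k'" using pt_vecs[OF p'(1)] by blast
          moreover have "\<phi> x \<in> H" using x p' p2 by blast
          ultimately show "x \<in> ?Q" by simp
        qed
        then have "p' \<in> ?P" using p'(1) by simp
        then show "p \<in> (`) \<phi> ` ?P" using p'(2) by blast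
      qed
    qed
  qed
  also have "\<dots> = mult_of k' (\<lambda>p. M (\<phi> ` p)) ?Q" by (simp add: mult_of_def)
  finally show ?thesis .
qed

lemma mult_full: "mult_of k' (\<lambda>p. M (\<phi> ` p)) (vecs k') = f"
proof -
  have eq: "{p\<in>pg_points k'. p \<subseteq> vecs k'} = pg_points k'" using pt_vecs by auto
  show ?thesis unfolding mult_of_def eq using mh' by (simp add: minihyper_def)
qed

lemma f_ne_m: "f \<noteq> m"
proof
  assume fm: "f = m"
  let ?M' = "\<lambda>p. M (\<phi> ` p)"
  obtain H' where H': "H' \<in> pg_hyperplanes k'" "mult_of k' ?M' H' = m"
    using mh' by (auto simp: minihyper_def)
  then obtain b where b: "b \<in> vecs k'" "b \<noteq> (\<lambda>_. 0)" "H' = hyp k' b" by (auto simp: pg_hyp_eq)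
  let ?P = "pg_points k' :: (nat \<Rightarrow> 'a) set set"
  let ?PH = "{p\<in>pg_points k'. p \<subseteq> H'}"
  have fin: "finite ?P" by (rule finite_pg_points)
  have "sum ?M' ?P = sum ?M' (?P - ?PH) + sum ?M' ?PH"
    by (rule sum.subset_diff) (use fin in auto)
  moreover have "sum ?M' ?P = f" using mh' by (simp add: minihyper_def)
  moreover have "sum ?M' ?PH = m" using H' by (simp add: mult_of_def)
  ultimately have "sum ?M' (?P - ?PH) = 0" using fm by simp
  then have zero: "\<forall>p\<in>?P - ?PH. ?M' p = 0" using fin by simp
  have Hs: "subsp k (\<phi> ` H')" using phi_subsp_img[OF hyp_subsp[of k' b]] b(3) by simp
  have "support_vecs k M \<subseteq> \<phi> ` H'"
  proof
    fix v assume "v \<in> support_vecs k M"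
    then obtain p where p: "p \<in> pg_points k" "M p > 0" "v \<in> p" by (auto simp: support_vecs_def)
    obtain p' where p': "p' \<in> pg_points k'" "p = \<phi> ` p'" using S_points[OF p(1) supp_S[OF p(1,2)]] by blast
    have "p' \<subseteq> H'"
    proof (rule ccontr)
      assume "\<not> p' \<subseteq> H'"
      then have "p' \<in> ?P - ?PH" using p'(1) by simp
      then have "M (\<phi> ` p') = 0" using zero by blast
      then show False using p p' by simp
    qed
    then show "v \<in> \<phi> ` H'" using p p' by auto
  qed
  then have "lin_span (support_vecs k M) \<subseteq> \<phi> ` H'"
    by (rule span_sub[OF Hs])
  then have sub: "\<phi> ` vecs k' \<subseteq> \<phi> ` H'" using S b(3) by simp
  obtain j where j: "j < k'" "b j \<noteq> 0" using nonzero_idx[OF b(1,2)] by blast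
  have ej: "ev j \<in> vecs k'" using ev_vecs[OF j(1)] .
  then obtain y where y: "y \<in> H'" "\<phi> (ev j) = \<phi> y" using sub by blast
  have yv: "y \<in> vecs k'" using y(1) b(3) by (simp add: hyp_def)
  have "ev j = y" using inj_onD[OF phi_inj[OF emb] y(2) ej yv] .
  then have "dotp k' b (ev j) = 0" using y(1) b(3) by (simp add: hyp_def)
  then show False using j by (simp add: dotp_ev)
qed

end



theorem lemma6:
  fixes M :: "(nat \<Rightarrow> 'a::{field,finite}) set \<Rightarrow> nat"
    and \<phi> :: "(nat \<Rightarrow> 'a) \<Rightarrow> (nat \<Rightarrow> 'a)"
    and k k' f m :: nat
  assumes mh: "minihyper k f m M"
    and rk: "mh_rank k M = k'"
    and lt: "k' < k"
    and emb: "lin_embedding k' k \<phi>"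
    and S: "\<phi> ` vecs k' = lin_span (support_vecs k M)"
    and mh': "minihyper k' f m (\<lambda>p. M (\<phi> ` p))"
    and rk': "mh_rank k' (\<lambda>p. M (\<phi> ` p)) = k'"
  shows "e_count k m M = card (UNIV :: 'a set) ^ (k - k') * e_count k' m (\<lambda>p. M (\<phi> ` p))"
proof -
  let ?q = "card (UNIV :: 'a set)"
  let ?M' = "\<lambda>p. M (\<phi> ` p)"
  let ?r = "rr \<phi> k k'"
  define E where "E = {H \<in> pg_hyperplanes k. mult_of k M H = m}"
  define E' where "E' = {H \<in> pg_hyperplanes k'. mult_of k' ?M' H = m}"
  define B where "B = {b\<in>vecs k'. b \<noteq> (\<lambda>_. 0) \<and> hyp k' b \<in> E'}"
  have le: "k' \<le> k" using lt by simp
  have cE: "card {a\<in>vecs k. a \<noteq> (\<lambda>_. 0) \<and> hyp k a \<in> E} = (?q - 1) * card E"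
    by (rule card_forms) (simp add: E_def)
  have cB: "card B = (?q - 1) * card E'"
    unfolding B_def by (rule card_forms) (simp add: E'_def)
  have key: "mult_of k M (hyp k a) = mult_of k' ?M' (hyp k' (?r a))" if a: "a \<in> vecs k" for a
  proof -
    have "{x\<in>vecs k'. \<phi> x \<in> hyp k a} = hyp k' (?r a)"
      using phi_vecs[OF emb] dotp_phi[OF emb] by (auto simp: hyp_def)
    then show ?thesis using transfer[OF emb S mh', of "hyp k a"] by simp
  qed
  have hv: "hyp k' (\<lambda>i. 0::'a) = vecs k'" by (auto simp: hyp_def dotp_def)
  have fm: "f \<noteq> m" by (rule f_ne_m[OF emb S mh'])
  have mf: "mult_of k' ?M' (vecs k') = f" by (rule mult_full[OF emb S mh'])
  have seteq: "{a\<in>vecs k. a \<noteq> (\<lambda>_. 0) \<and> hyp k a \<in> E} = {a\<in>vecs k. ?r a \<in> B}"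
  proof (intro equalityI subsetI)
    fix a assume "a \<in> {a\<in>vecs k. a \<noteq> (\<lambda>_. 0) \<and> hyp k a \<in> E}"
    then have a: "a \<in> vecs k" "a \<noteq> (\<lambda>_. 0)" "mult_of k M (hyp k a) = m" by (auto simp: E_def)
    then have m': "mult_of k' ?M' (hyp k' (?r a)) = m" using key by simp
    have nz: "?r a \<noteq> (\<lambda>_. 0)"
    proof
      assume "?r a = (\<lambda>_. 0)"
      then have "mult_of k' ?M' (vecs k') = m" using m' hv by simp
      then show False using mf fm by simp
    qed
    have rv: "?r a \<in> vecs k'" by (rule rr_vecs[OF emb])
    have "hyp k' (?r a) \<in> pg_hyperplanes k'" unfolding pg_hyp_eq using nz rv by blast
    then show "a \<in> {a\<in>vecs k. ?r a \<in> B}" using a nz m' rv by (simp add: B_def E'_def)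
  next
    fix a assume "a \<in> {a\<in>vecs k. ?r a \<in> B}"
    then have a: "a \<in> vecs k" "?r a \<noteq> (\<lambda>_. 0)" "mult_of k' ?M' (hyp k' (?r a)) = m"
      by (auto simp: B_def E'_def)
    have nz: "a \<noteq> (\<lambda>_. 0)"
    proof
      assume "a = (\<lambda>_. 0)"
      then have "?r a = ?r (\<lambda>i. 0)" by simp
      then show False using a(2) rr_0[OF emb] by simp
    qed
    have "hyp k a \<in> pg_hyperplanes k" unfolding pg_hyp_eq using nz a(1) by blast
    then show "a \<in> {a\<in>vecs k. a \<noteq> (\<lambda>_. 0) \<and> hyp k a \<in> E}"
      using a nz key by (simp add: E_def)
  qed
  have "B \<subseteq> vecs k'" by (auto simp: B_def)
  then have cR: "card {a\<in>vecs k. ?r a \<in> B} = card B * ?q ^ (k - k')"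
    by (rule card_rr_preimage[OF emb le])
  have "(?q - 1) * card E = card {a\<in>vecs k. a \<noteq> (\<lambda>_. 0) \<and> hyp k a \<in> E}" using cE by simp
  also have "\<dots> = card {a\<in>vecs k. ?r a \<in> B}" using seteq by simp
  also have "\<dots> = card B * ?q ^ (k - k')" by (rule cR)
  also have "\<dots> = (?q - 1) * (card E' * ?q ^ (k - k'))" using cB by simp
  finally have eq: "(?q - 1) * card E = (?q - 1) * (card E' * ?q ^ (k - k'))" .
  have "card {0::'a, 1} \<le> ?q" by (rule card_mono) simp_all
  then have "?q - 1 > 0" by simp
  then have "card E = card E' * ?q ^ (k - k')" using eq by (simp only: mult_left_cancel gr_implies_not0 not_False_eq_True)
  then show ?thesis by (simp add: e_count_def E_def E'_def)
qed


end
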